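(* Let $S$ be a sticky tree with $n$ edges ($n\ge 1$). If the Tamari interval $[\mathrm{D}(S),\mathrm{E}(S)]$ is synchronized, then every non-root node of $S$ that is not a leaf is primary.
   Context: Sticky trees: a plane tree is a rooted tree in which the children of every node are linearly ordered (left to right). The root has depth $0$, a child of a node of depth $d$ has depth $d+1$; a leaf is a node without children. The prefix order is: the root, followed by the prefix order of the subtree of its leftmost child, then of its second child, and so on. $S_u$ denotes the subtree rooted at $u$. A sticky tree is a plane tree $S$ with node set $V$ and a labeling $\ell:V\to\mathbb{N}$ such that: (1) every node $u$ of depth $d$ has $0\le\ell(u)\le d$; (2) every node $u$ of depth $d>0$ has some $v\in S_u$ (possibly $v=u$) with $\ell(v)<d$; (3) for every node $u$ of depth $d$, if some $v\in S_u$ has $\ell(v)=d$, then every node of $S_u$ (including $u$) preceding $v$ in prefix order has label at least $d$. A non-root node is primary if its label equals its depth. The certificate of a non-root node $u$ of depth $d$ is the first node, in prefix order, of $S_u$ whose label is $<d$. The certificate-counting function $c:V\to\mathbb{N}$ assigns to each node $w$ the number of non-root nodes whose certificate is $w$. The words: $\mathrm{E}(S)$ is the word in $\{u,d\}$ obtained by the depth-first traversal of $S$ from the root visiting children left to right, writing $u$ for each move from a node to a child and $d$ for each move back to the parent. If $v_1,\dots,v_n$ are the non-root nodes of $S$ in prefix order, $\mathrm{D}(S)=u\,d^{c(v_1)}\,u\,d^{c(v_2)}\cdots u\,d^{c(v_n)}$. These are Dyck paths of length $2n$ (words with $n$ letters $u$ and $n$ letters $d$, every prefix having at least as many $u$'s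 as $d$'s), and $[\mathrm{D}(S),\mathrm{E}(S)]$ is a Tamari interval. Synchronized intervals: the type of a Dyck path $D$ of length $2n$ is the word $w_1\cdots w_{n-1}$ over $\{N,E\}$ with $w_i=N$ if the $i$-th letter $u$ of $D$ is immediately followed by a letter $d$, and $w_i=E$ otherwise. A Tamari interval $[D_1,D_2]$ is synchronized if $D_1$ and $D_2$ have the same type. *)

theory Defs
  imports Main
begin

datatype ltree = LNode nat "ltree list"

fun root_label :: "ltree \<Rightarrow> nat" where
  "root_label (LNode a ts) = a"

fun children :: "ltree \<Rightarrow> ltree list" where
  "children (LNode a ts) = ts"

text \<open>Nodes are addressed by paths of child indices (0-based) from the root.\<close>
fun node_at :: "ltree \<Rightarrow> nat list \<Rightarrow> ltree option" where
  "node_at t [] = Some t"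
| "node_at (LNode a ts) (i # p) = (if i < length ts then node_at (ts ! i) p else None)"

definition nodes :: "ltree \<Rightarrow> nat list set" where
  "nodes t = {p. node_at t p \<noteq> None}"

definition label :: "ltree \<Rightarrow> nat list \<Rightarrow> nat" where
  "label t p = root_label (the (node_at t p))"

text \<open>Number of edges = number of non-root nodes.\<close>
definition num_edges :: "ltree \<Rightarrow> nat" where
  "num_edges t = card (nodes t) - 1"

definition is_leaf :: "ltree \<Rightarrow> nat list \<Rightarrow> bool" where
  "is_leaf t p = (children (the (node_at t p)) = [])"

definition in_subtree :: "nat list \<Rightarrow> nat list \<Rightarrow> bool" where
  "in_subtree u v = (\<exists>s. v = u @ s)"

definition pre_less :: "nat list \<Rightarrow> nat list \<Rightarrow> bool" where
  "pre_less p q = ((\<exists>s. s \<noteq> [] \<and> q = p @ s) \<or>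
     (\<exists>r i j s s'. p = r @ i # s \<and> q = r @ j # s' \<and> i < j))"

definition sticky :: "ltree \<Rightarrow> bool" where
  "sticky t = (
     (\<forall>u\<in>nodes t. label t u \<le> length u) \<and>
     (\<forall>u\<in>nodes t. u \<noteq> [] \<longrightarrow> (\<exists>v\<in>nodes t. in_subtree u v \<and> label t v < length u)) \<and>
     (\<forall>u\<in>nodes t. \<forall>v\<in>nodes t. in_subtree u v \<and> label t v = length u \<longrightarrow>
        (\<forall>w\<in>nodes t. in_subtree u w \<and> pre_less w v \<longrightarrow> label t w \<ge> length u)))"

definition primary :: "ltree \<Rightarrow> nat list \<Rightarrow> bool" where
  "primary t u = (u \<noteq> [] \<and> label t u = length u)"

definition certificate :: "ltree \<Rightarrow> nat list \<Rightarrow> nat list" where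
  "certificate t u = (THE v. v \<in> nodes t \<and> in_subtree u v \<and> label t v < length u \<and>
      (\<forall>w\<in>nodes t. in_subtree u w \<and> label t w < length u \<longrightarrow> \<not> pre_less w v))"

definition cert_count :: "ltree \<Rightarrow> nat list \<Rightarrow> nat" where
  "cert_count t w = card {u \<in> nodes t. u \<noteq> [] \<and> certificate t u = w}"

fun pre_tree :: "ltree \<Rightarrow> nat list list"
and pre_forest :: "nat \<Rightarrow> ltree list \<Rightarrow> nat list list" where
  "pre_tree (LNode a ts) = [] # pre_forest 0 ts"
| "pre_forest k [] = []"
| "pre_forest k (t # ts) = map (Cons k) (pre_tree t) @ pre_forest (Suc k) ts"

datatype step = U | Dn

fun euler :: "ltree \<Rightarrow> step list" where
  "euler (LNode a ts) = concat (map (\<lambda>s. U # euler s @ [Dn]) ts)"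

definition E_word :: "ltree \<Rightarrow> step list" where
  "E_word t = euler t"

definition D_word :: "ltree \<Rightarrow> step list" where
  "D_word t = concat (map (\<lambda>v. U # replicate (cert_count t v) Dn) (tl (pre_tree t)))"

definition is_dyck :: "step list \<Rightarrow> bool" where
  "is_dyck w = (count_list w U = count_list w Dn \<and>
     (\<forall>k\<le>length w. count_list (take k w) Dn \<le> count_list (take k w) U))"

definition tamari_step :: "step list \<Rightarrow> step list \<Rightarrow> bool" where
  "tamari_step w w' = (\<exists>a q b. is_dyck q \<and>
      w = a @ [Dn] @ (U # q @ [Dn]) @ b \<and> w' = a @ (U # q @ [Dn]) @ [Dn] @ b)"

definition tamari_le :: "step list \<Rightarrow> step list \<Rightarrow> bool" where
  "tamari_le w w' = (is_dyck w \<and> is_dyck w' \<and> length w = length w' \<and> tamari_step\<^sup>*\<^sup>* w w')"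

datatype NE = N | E

definition dyck_type :: "step list \<Rightarrow> NE list" where
  "dyck_type w = map (\<lambda>i. if Suc i < length w \<and> w ! Suc i = Dn then N else E)
      (butlast (filter (\<lambda>i. w ! i = U) [0..<length w]))"

definition synchronized :: "step list \<Rightarrow> step list \<Rightarrow> bool" where
  "synchronized w w' = (tamari_le w w' \<and> dyck_type w = dyck_type w')"

end

theory Submission
  imports Defs
begin

fun fd :: "step list \<Rightarrow> bool" where
  "fd (Dn # _) = True" | "fd _ = False"

fun uf :: "step list \<Rightarrow> bool list" where
  "uf [] = []" | "uf (U # w) = fd w # uf w" | "uf (Dn # w) = uf w"

lemma uf_idx: "map (\<lambda>i. Suc i < length w \<and> w ! Suc i = Dn) (filter (\<lambda>i. w ! i = U) [0..<length w]) = uf w"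
proof (induction w)
  case Nil
  then show ?case by simp
next
  case (Cons x w)
  have e: "[0..<length (x#w)] = 0 # map Suc [0..<length w]"
    by (simp add: upt_conv_Cons map_Suc_upt del: upt_Suc)
  have f: "filter (\<lambda>i. (x#w) ! i = U) (map Suc [0..<length w]) = map Suc (filter (\<lambda>i. w ! i = U) [0..<length w])"
    by (simp add: filter_map comp_def)
  have m: "map (\<lambda>i. Suc i < length (x#w) \<and> (x#w) ! Suc i = Dn) (map Suc (filter (\<lambda>i. w ! i = U) [0..<length w]))
      = uf w" using Cons by (simp add: comp_def)
  have h: "(Suc 0 < length (x#w) \<and> (x#w) ! Suc 0 = Dn) = fd w"
    by (cases w rule: fd.cases) auto
  show ?case
    apply (subst e)
    apply (cases x)
    using f m h by simp_all
qed

lemma dyck_type_uf: "dyck_type w = map (\<lambda>b. if b then N else E) (butlast (uf w))"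
proof -
  have "dyck_type w = map (\<lambda>b. if b then N else E) (map (\<lambda>i. Suc i < length w \<and> w ! Suc i = Dn)
        (butlast (filter (\<lambda>i. w ! i = U) [0..<length w])))"
    unfolding dyck_type_def by simp
  also have "\<dots> = map (\<lambda>b. if b then N else E) (butlast (uf w))"
    by (simp only: map_butlast uf_idx)
  finally show ?thesis .
qed

lemma uf_concat_blocks:
  "uf (concat (map (\<lambda>v. U # replicate (f v) Dn) L)) = map (\<lambda>v. f v > 0) L"
proof (induction L)
  case Nil
  then show ?case by simp
next
  case (Cons v L)
  have r: "uf (replicate k Dn @ w) = uf w" for k w by (induction k) auto
  have hd: "fd (concat (map (\<lambda>v. U # replicate (f v) Dn) L)) = False"
    by (cases L) auto
  show ?case
  proof (cases "f v")
    case 0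
    then show ?thesis using Cons hd by simp
  next
    case (Suc k)
    then show ?thesis using Cons r by simp
  qed
qed

lemma uf_app_Dn: "uf (a @ Dn # b) = uf (a @ [Dn]) @ uf b"
proof (induction a)
  case Nil
  then show ?case by simp
next
  case (Cons x a)
  show ?case
  proof (cases x)
    case U
    have "fd (a @ Dn # b) = fd (a @ [Dn])" by (cases a rule: fd.cases) auto
    then show ?thesis using Cons U by simp
  next
    case Dn
    then show ?thesis using Cons by simp
  qed
qed

lemma euler_shape: "euler t = [] \<or> (\<exists>a0. euler t = a0 @ [Dn])"
proof (cases t)
  case (LNode a ts)
  have "concat (map (\<lambda>s. U # euler s @ [Dn]) ts) = [] \<or>
        (\<exists>a0. concat (map (\<lambda>s. U # euler s @ [Dn]) ts) = a0 @ [Dn])"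
  proof (induction ts)
    case Nil then show ?case by simp
  next
    case (Cons s ts)
    then show ?case
    proof
      assume "concat (map (\<lambda>s. U # euler s @ [Dn]) ts) = []"
      then show ?thesis by auto
    next
      assume "\<exists>a0. concat (map (\<lambda>s. U # euler s @ [Dn]) ts) = a0 @ [Dn]"
      then obtain a0 where "concat (map (\<lambda>s. U # euler s @ [Dn]) ts) = a0 @ [Dn]" by blast
      then show ?thesis by auto
    qed
  qed
  then show ?thesis using LNode by simp
qed

lemma uf_euler_app: "uf (euler s @ b) = uf (euler s) @ uf b"
proof -
  from euler_shape[of s] show ?thesis
  proof
    assume "euler s = []" then show ?thesis by simp
  next
    assume "\<exists>a0. euler s = a0 @ [Dn]"
    then obtain a0 where "euler s = a0 @ [Dn]" by blast
    then show ?thesis using uf_app_Dn[of a0 b] by simp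
  qed
qed

lemma euler_fd: "fd (euler s @ Dn # b) = (children s = [])"
proof (cases s)
  case (LNode a ts)
  then show ?thesis by (cases ts) auto
qed

lemma pre_tree_hd: "pre_tree s = [] # tl (pre_tree s)"
  by (cases s) auto

lemma forest_leaf:
  "(\<forall>i<length ts. ts0 ! (k+i) = ts ! i) \<Longrightarrow> k + length ts \<le> length ts0 \<Longrightarrow>
   map (is_leaf (LNode a ts0)) (pre_forest k ts) = concat (map (\<lambda>s. map (is_leaf s) (pre_tree s)) ts)"
proof (induction ts arbitrary: k)
  case Nil
  then show ?case by simp
next
  case (Cons s ts)
  have k: "k < length ts0" "ts0 ! k = s" using Cons.prems by (auto dest: spec[of _ 0])
  have ih: "map (is_leaf (LNode a ts0)) (pre_forest (Suc k) ts) = concat (map (\<lambda>s. map (is_leaf s) (pre_tree s)) ts)"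
    apply (rule Cons.IH)
    using Cons.prems by (auto dest: spec[of _ "Suc _"])
  have "map (is_leaf (LNode a ts0)) (map (Cons k) (pre_tree s)) = map (is_leaf s) (pre_tree s)"
    using k by (simp add: is_leaf_def)
  then show ?case using ih by simp
qed

lemma uf_euler: "uf (euler t) = map (is_leaf t) (tl (pre_tree t))"
proof (induction t)
  case (LNode a ts)
  have "uf (concat (map (\<lambda>s. U # euler s @ [Dn]) ts)) = concat (map (\<lambda>s. (children s = []) # uf (euler s)) ts)"
  proof (induction ts)
    case Nil then show ?case by simp
  next
    case (Cons s ts)
    have "uf (euler s @ [Dn] @ concat (map (\<lambda>s. U # euler s @ [Dn]) ts)) =
          uf (euler s) @ uf (concat (map (\<lambda>s. U # euler s @ [Dn]) ts))"
      using uf_euler_app[of s "Dn # concat (map (\<lambda>s. U # euler s @ [Dn]) ts)"] by simp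
    then show ?case using Cons euler_fd[of s "concat (map (\<lambda>s. U # euler s @ [Dn]) ts)"] by simp
  qed
  also have "\<dots> = concat (map (\<lambda>s. map (is_leaf s) (pre_tree s)) ts)"
  proof -
    have "\<And>s. s \<in> set ts \<Longrightarrow> (children s = []) # uf (euler s) = map (is_leaf s) (pre_tree s)"
    proof -
      fix s assume "s \<in> set ts"
      then have "uf (euler s) = map (is_leaf s) (tl (pre_tree s))" using LNode by blast
      then show "(children s = []) # uf (euler s) = map (is_leaf s) (pre_tree s)"
        by (subst pre_tree_hd) (simp add: is_leaf_def)
    qed
    then show ?thesis by (metis (no_types, lifting) map_eq_conv)
  qed
  also have "\<dots> = map (is_leaf (LNode a ts)) (pre_forest 0 ts)"
    by (rule forest_leaf[symmetric]) auto
  finally show ?case by simp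
qed

lemma forest_mem: "i < length ts \<Longrightarrow> q \<in> set (pre_tree (ts ! i)) \<Longrightarrow> (k+i) # q \<in> set (pre_forest k ts)"
proof (induction ts arbitrary: k i)
  case Nil then show ?case by simp
next
  case (Cons s ts)
  show ?case
  proof (cases i)
    case 0 then show ?thesis using Cons by simp
  next
    case (Suc j)
    then have "(Suc k + j) # q \<in> set (pre_forest (Suc k) ts)" using Cons.IH[of j "Suc k"] Cons.prems by simp
    then show ?thesis using Suc by simp
  qed
qed

lemma nodes_sub: "p \<in> nodes t \<Longrightarrow> p \<in> set (pre_tree t)"
proof (induction t arbitrary: p)
  case (LNode a ts)
  show ?case
  proof (cases p)
    case Nil then show ?thesis by simp
  next
    case (Cons k q)
    with LNode.prems have k: "k < length ts" and q: "q \<in> nodes (ts ! k)"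
      by (auto simp: nodes_def split: if_splits)
    have "q \<in> set (pre_tree (ts ! k))" using LNode.IH[OF nth_mem[OF k]] q by blast
    then have "(0+k) # q \<in> set (pre_forest 0 ts)" by (rule forest_mem[OF k])
    then show ?thesis using Cons by simp
  qed
qed

lemma last_uf: "last w = Dn \<Longrightarrow> uf w \<noteq> [] \<Longrightarrow> last (uf w) = True"
proof (induction w)
  case Nil then show ?case by simp
next
  case (Cons x w)
  show ?case
  proof (cases "uf w = []")
    case False
    then have "w \<noteq> []" by auto
    then have "last (uf w)" using Cons False by simp
    then show ?thesis using False by (cases x) auto
  next
    case True
    then have x: "x = U" using Cons.prems by (cases x) auto
    have "w \<noteq> []" using Cons.prems x by auto
    then obtain w' where "w = Dn # w'" using True by (cases w; cases "hd w") auto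
    then show ?thesis using x True by simp
  qed
qed

lemma not_pre_less_ext: "\<not> pre_less (u @ s) u"
proof
  assume "pre_less (u @ s) u"
  then consider (a) s' where "s' \<noteq> []" "u = (u @ s) @ s'"
    | (b) r i j s1 s2 where "u @ s = r @ i # s1" "u = r @ j # s2" "i < j"
    unfolding pre_less_def by blast
  then show False
  proof cases
    case a
    then have "length u = length u + length s + length s'" by (metis length_append)
    then show False using a(1) by simp
  next
    case b
    then have "r @ j # (s2 @ s) = r @ i # s1" by simp
    then show False using b(3) by simp
  qed
qed

lemma certificate_self:
  assumes "u \<in> nodes t" "label t u < length u"
  shows "certificate t u = u"
  unfolding certificate_def
proof (rule the_equality)
  show "u \<in> nodes t \<and> in_subtree u u \<and> label t u < length u \<and>
    (\<forall>w\<in>nodes t. in_subtree u w \<and> label t w < length u \<longrightarrow> \<not> pre_less w u)"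
    using assms not_pre_less_ext by (auto simp: in_subtree_def)
next
  fix v assume v: "v \<in> nodes t \<and> in_subtree u v \<and> label t v < length u \<and>
    (\<forall>w\<in>nodes t. in_subtree u w \<and> label t w < length u \<longrightarrow> \<not> pre_less w v)"
  then obtain s where s: "v = u @ s" by (auto simp: in_subtree_def)
  show "v = u"
  proof (rule ccontr)
    assume "v \<noteq> u"
    then have "s \<noteq> []" using s by simp
    then have "pre_less u v" using s by (auto simp: pre_less_def)
    moreover have "in_subtree u u" by (simp add: in_subtree_def)
    ultimately show False using v assms by blast
  qed
qed

theorem mainTheorem12:
  fixes S :: ltree
  assumes "sticky S"
    and "num_edges S \<ge> 1"
    and "synchronized (D_word S) (E_word S)"
  shows "\<forall>u\<in>nodes S. u \<noteq> [] \<and> \<not> is_leaf S u \<longrightarrow> primary S u"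
proof (intro ballI impI)
  fix u assume u: "u \<in> nodes S" "u \<noteq> [] \<and> \<not> is_leaf S u"
  define L where "L = tl (pre_tree S)"
  have pt: "pre_tree S = [] # L" unfolding L_def by (rule pre_tree_hd)
  have uL: "u \<in> set L" using nodes_sub[OF u(1)] u(2) pt by simp
  have fin: "finite (nodes S)" using nodes_sub by (meson finite_set finite_subset subsetI)
  have ufD: "uf (D_word S) = map (\<lambda>v. cert_count S v > 0) L"
    unfolding D_word_def L_def by (rule uf_concat_blocks)
  have ufE: "uf (E_word S) = map (is_leaf S) L"
    unfolding E_word_def L_def by (rule uf_euler)
  have inj: "inj (\<lambda>b. if b then N else E)" by (auto simp: inj_def split: if_splits)
  have "map (\<lambda>b. if b then N else E) (butlast (uf (D_word S))) =
        map (\<lambda>b. if b then N else E) (butlast (uf (E_word S)))"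
    using assms(3) by (simp add: synchronized_def dyck_type_uf)
  then have bl: "butlast (map (\<lambda>v. cert_count S v > 0) L) = butlast (map (is_leaf S) L)"
    using ufD ufE inj by (simp add: inj_map_eq_map)
  obtain i where i: "i < length L" "L ! i = u" using uL by (metis in_set_conv_nth)
  have Lne: "L \<noteq> []" using uL by auto
  have lastleaf: "is_leaf S (last L)"
  proof -
    have "uf (euler S) \<noteq> []" using ufE Lne unfolding E_word_def by simp
    moreover have "last (euler S) = Dn" using euler_shape[of S] calculation by auto
    ultimately have "last (uf (euler S))" using last_uf by blast
    then show ?thesis using ufE Lne unfolding E_word_def by (simp add: last_map)
  qed
  have "i \<noteq> length L - 1"
  proof
    assume "i = length L - 1"
    then have "u = last L" using i Lne by (simp add: last_conv_nth)
    then show False using lastleaf u(2) by simp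
  qed
  then have i2: "i < length L - 1" using i by simp
  have "(cert_count S u > 0) = is_leaf S u"
  proof -
    have "butlast (map (\<lambda>v. cert_count S v > 0) L) ! i = butlast (map (is_leaf S) L) ! i"
      using bl by simp
    then show ?thesis using i i2 by (simp add: nth_butlast)
  qed
  then have c0: "cert_count S u = 0" using u(2) by simp
  have le: "label S u \<le> length u" using assms(1) u(1) by (simp add: sticky_def)
  have "\<not> label S u < length u"
  proof
    assume lt: "label S u < length u"
    have "u \<in> {v \<in> nodes S. v \<noteq> [] \<and> certificate S v = u}"
      using u certificate_self[OF u(1) lt] by simp
    moreover have "finite {v \<in> nodes S. v \<noteq> [] \<and> certificate S v = u}" using fin by simp
    ultimately have "cert_count S u > 0" unfolding cert_count_def by (auto simp: card_gt_0_iff)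
    then show False using c0 by simp
  qed
  then show "primary S u" using le u by (simp add: primary_def)
qed

end
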